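(* Let $\mathfrak{A}$ be a $(k,p,q)$-differential subalgebra of the $C^*$-algebra $\mathfrak{B}$. Then for every $a=a^*\in\mathfrak{A}$ and every $\tau>\log_k(\max\{k-1,p\})$ one has $$\|u(ta)\|_{\mathfrak{A}}=O(e^{|t|^\tau})\quad\text{as } |t|\to\infty,\ t\in\mathbb{R}.$$
   Context: Let $\mathfrak{B}$ be a $C^*$-algebra with norm $\|\cdot\|_{\mathfrak{B}}$. A $(k,p,q)$-differential subalgebra of $\mathfrak{B}$ is a $*$-subalgebra $\mathfrak{A}\subseteq\mathfrak{B}$ equipped with its own norm $\|\cdot\|_{\mathfrak{A}}$ making it a Banach $*$-algebra on which the involution is continuous, where $k\in\mathbb{Z}$, $k\geq 2$, and $p,q>0$ are reals with $p+q=k$, such that for some constant $C>0$, $\|a^k\|_{\mathfrak{A}}\leq C\|a\|_{\mathfrak{A}}^p\|a\|_{\mathfrak{B}}^q$ for all $a\in\mathfrak{A}$. For $b\in\mathfrak{A}$, $u(b)=e^{ib}-1=\sum_{j=1}^\infty \frac{i^j b^j}{j!}\in\mathfrak{A}$ (norm-convergent series in $\mathfrak{A}$). *)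

theory Defs
  imports "HOL-Analysis.Analysis"
begin

text \<open>Complex Banach algebras are encoded as real Banach algebras ('b :: {real_normed_algebra, banach},
  not necessarily unital) together with a map J = multiplication by the imaginary unit.\<close>

definition cscale :: "('b::real_vector \<Rightarrow> 'b) \<Rightarrow> complex \<Rightarrow> 'b \<Rightarrow> 'b" where
  "cscale J c x = Re c *\<^sub>R x + Im c *\<^sub>R J x"

text \<open>Positive powers in a possibly non-unital algebra: spow a n = a^(n+1).\<close>
fun spow :: "'a::times \<Rightarrow> nat \<Rightarrow> 'a" where
  "spow a 0 = a"
| "spow a (Suc n) = a * spow a n"

definition cstar_algebra :: "('b::{real_normed_algebra,banach} \<Rightarrow> 'b) \<Rightarrow> ('b \<Rightarrow> 'b) \<Rightarrow> bool" where
  "cstar_algebra J st \<longleftrightarrow>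
     (\<forall>x y. J (x + y) = J x + J y) \<and> (\<forall>r x. J (r *\<^sub>R x) = r *\<^sub>R J x) \<and>
     (\<forall>x. J (J x) = - x) \<and>
     (\<forall>c x. norm (cscale J c x) = cmod c * norm x) \<and>
     (\<forall>x y. J (x * y) = J x * y \<and> J (x * y) = x * J y) \<and>
     (\<forall>x y. st (x + y) = st x + st y) \<and> (\<forall>r x. st (r *\<^sub>R x) = r *\<^sub>R st x) \<and>
     (\<forall>x. st (J x) = - J (st x)) \<and> (\<forall>x. st (st x) = x) \<and>
     (\<forall>x y. st (x * y) = st y * st x) \<and>
     (\<forall>x. norm (st x * x) = (norm x)\<^sup>2)"

definition banach_star_subalgebra ::
  "('b::{real_normed_algebra,banach} \<Rightarrow> 'b) \<Rightarrow> ('b \<Rightarrow> 'b) \<Rightarrow> 'b set \<Rightarrow> ('b \<Rightarrow> real) \<Rightarrow> bool" where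
  "banach_star_subalgebra J st A nA \<longleftrightarrow>
     0 \<in> A \<and> (\<forall>x\<in>A. \<forall>y\<in>A. x + y \<in> A \<and> x * y \<in> A) \<and>
     (\<forall>c. \<forall>x\<in>A. cscale J c x \<in> A) \<and> (\<forall>x\<in>A. st x \<in> A) \<and>
     (\<forall>x\<in>A. nA x = 0 \<longleftrightarrow> x = 0) \<and>
     (\<forall>x\<in>A. \<forall>y\<in>A. nA (x + y) \<le> nA x + nA y) \<and>
     (\<forall>c. \<forall>x\<in>A. nA (cscale J c x) = cmod c * nA x) \<and>
     (\<forall>x\<in>A. \<forall>y\<in>A. nA (x * y) \<le> nA x * nA y) \<and>
     (\<forall>X. (\<forall>n. X n \<in> A) \<and> (\<forall>e>0. \<exists>N. \<forall>m\<ge>N. \<forall>n\<ge>N. nA (X m - X n) < e)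
          \<longrightarrow> (\<exists>L\<in>A. (\<lambda>n. nA (X n - L)) \<longlonglongrightarrow> 0)) \<and>
     (\<exists>C. \<forall>x\<in>A. nA (st x) \<le> C * nA x)"

definition differential_subalgebra ::
  "('b::{real_normed_algebra,banach} \<Rightarrow> 'b) \<Rightarrow> ('b \<Rightarrow> 'b) \<Rightarrow> 'b set \<Rightarrow> ('b \<Rightarrow> real)
    \<Rightarrow> nat \<Rightarrow> real \<Rightarrow> real \<Rightarrow> bool" where
  "differential_subalgebra J st A nA k p q \<longleftrightarrow>
     cstar_algebra J st \<and> banach_star_subalgebra J st A nA \<and>
     k \<ge> 2 \<and> p > 0 \<and> q > 0 \<and> p + q = real k \<and>
     (\<exists>C>0. \<forall>a\<in>A. nA (spow a (k - 1)) \<le> C * nA a powr p * norm a powr q)"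

text \<open>u(b) = e^{ib} - 1 = sum_{j>=1} i^j b^j / j!, the limit being taken in the A-norm.\<close>
definition uA :: "('b::{real_normed_algebra,banach} \<Rightarrow> 'b) \<Rightarrow> 'b set \<Rightarrow> ('b \<Rightarrow> real) \<Rightarrow> 'b \<Rightarrow> 'b" where
  "uA J A nA b = (THE x. x \<in> A \<and>
     (\<lambda>n. nA ((\<Sum>j=1..n. cscale J (\<i> ^ j / of_nat (fact j)) (spow b (j - 1))) - x)) \<longlonglongrightarrow> 0)"

end

theory Submission
  imports Defs
begin


lemma spow_mult: "spow (x::'a::semigroup_mult) m * spow x n = spow x (m + n + 1)"
  by (induction m) (auto simp: mult.assoc)

locale DS =
  fixes J st :: "'b::{real_normed_algebra,banach} \<Rightarrow> 'b"
    and A :: "'b set" and nA :: "'b \<Rightarrow> real" and a :: 'b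
  assumes cs: "cstar_algebra J st" and bs: "banach_star_subalgebra J st A nA"
    and aA: "a \<in> A" and sa: "st a = a"
begin

lemma J_add: "J (x + y) = J x + J y" using cs unfolding cstar_algebra_def by blast
lemma J_scale: "J (r *\<^sub>R x) = r *\<^sub>R J x" using cs unfolding cstar_algebra_def by blast
lemma J_J: "J (J x) = - x" using cs unfolding cstar_algebra_def by blast
lemma J_mult1: "J (x * y) = J x * y" using cs unfolding cstar_algebra_def by blast
lemma J_mult2: "J (x * y) = x * J y" using cs unfolding cstar_algebra_def by blast
lemma st_add: "st (x + y) = st x + st y" using cs unfolding cstar_algebra_def by blast
lemma st_scale: "st (r *\<^sub>R x) = r *\<^sub>R st x" using cs unfolding cstar_algebra_def by blast
lemma st_J: "st (J x) = - J (st x)" using cs unfolding cstar_algebra_def by blast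
lemma st_st: "st (st x) = x" using cs unfolding cstar_algebra_def by blast
lemma st_mult: "st (x * y) = st y * st x" using cs unfolding cstar_algebra_def by blast
lemma cstar: "norm (st x * x) = (norm x)\<^sup>2" using cs unfolding cstar_algebra_def by blast

lemmas bsd = bs[unfolded banach_star_subalgebra_def]
lemma A0: "0 \<in> A" using bsd by (rule conjunct1)
lemma A_add: "x \<in> A \<Longrightarrow> y \<in> A \<Longrightarrow> x + y \<in> A" using bsd[THEN conjunct2, THEN conjunct1] by blast
lemma A_mult: "x \<in> A \<Longrightarrow> y \<in> A \<Longrightarrow> x * y \<in> A" using bsd[THEN conjunct2, THEN conjunct1] by blast
lemma A_cscale: "x \<in> A \<Longrightarrow> cscale J c x \<in> A" using bsd[THEN conjunct2, THEN conjunct2, THEN conjunct1] by blast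
lemma A_st: "x \<in> A \<Longrightarrow> st x \<in> A" using bsd[THEN conjunct2, THEN conjunct2, THEN conjunct2, THEN conjunct1] by blast
lemma nA_zero_iff: "x \<in> A \<Longrightarrow> nA x = 0 \<longleftrightarrow> x = 0" using bsd[THEN conjunct2, THEN conjunct2, THEN conjunct2, THEN conjunct2, THEN conjunct1] by blast
lemma nA_tri: "x \<in> A \<Longrightarrow> y \<in> A \<Longrightarrow> nA (x + y) \<le> nA x + nA y" using bsd[THEN conjunct2, THEN conjunct2, THEN conjunct2, THEN conjunct2, THEN conjunct2, THEN conjunct1] by blast
lemma nA_cscale: "x \<in> A \<Longrightarrow> nA (cscale J c x) = cmod c * nA x" using bsd[THEN conjunct2, THEN conjunct2, THEN conjunct2, THEN conjunct2, THEN conjunct2, THEN conjunct2, THEN conjunct1] by blast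
lemma nA_mult: "x \<in> A \<Longrightarrow> y \<in> A \<Longrightarrow> nA (x * y) \<le> nA x * nA y" using bsd[THEN conjunct2, THEN conjunct2, THEN conjunct2, THEN conjunct2, THEN conjunct2, THEN conjunct2, THEN conjunct2, THEN conjunct1] by blast
lemma nA_complete: "(\<forall>n. X n \<in> A) \<Longrightarrow> (\<forall>e>0. \<exists>N. \<forall>m\<ge>N. \<forall>n\<ge>N. nA (X m - X n) < e)
          \<Longrightarrow> (\<exists>L\<in>A. (\<lambda>n. nA (X n - L)) \<longlonglongrightarrow> 0)" using bsd[THEN conjunct2, THEN conjunct2, THEN conjunct2, THEN conjunct2, THEN conjunct2, THEN conjunct2, THEN conjunct2, THEN conjunct2, THEN conjunct1] by blast
lemma nA_st: "\<exists>C. \<forall>x\<in>A. nA (st x) \<le> C * nA x" using bsd[THEN conjunct2, THEN conjunct2, THEN conjunct2, THEN conjunct2, THEN conjunct2, THEN conjunct2, THEN conjunct2, THEN conjunct2, THEN conjunct2] by blast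

lemma J0: "J 0 = 0" using J_scale[of 0 0] by simp
lemma J_neg: "J (- x) = - J x" using J_scale[of "-1" x] by simp
lemma J_diff: "J (x - y) = J x - J y" using J_add[of x "-y"] J_neg by simp
lemma st0: "st 0 = 0" using st_scale[of 0 0] by simp
lemma st_neg: "st (- x) = - st x" using st_scale[of "-1" x] by simp
lemma st_diff: "st (x - y) = st x - st y" using st_add[of x "-y"] st_neg by simp
lemma st_sum: "st (sum f S) = sum (\<lambda>i. st (f i)) S"
  by (induction S rule: infinite_finite_induct) (auto simp: st0 st_add)

lemma cscale_of_real: "cscale J (of_real r) x = r *\<^sub>R x" by (simp add: cscale_def)
lemma cscale_one: "cscale J 1 x = x" by (simp add: cscale_def)
lemma cscale_zero: "cscale J 0 x = 0" by (simp add: cscale_def)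
lemma cscale_zero2: "cscale J c 0 = 0" by (simp add: cscale_def J0)
lemma cscale_neg1: "cscale J (-1) x = - x" by (simp add: cscale_def)
lemma cscale_add_left: "cscale J (c + d) x = cscale J c x + cscale J d x"
  by (simp add: cscale_def algebra_simps)
lemma cscale_add_right: "cscale J c (x + y) = cscale J c x + cscale J c y"
  by (simp add: cscale_def algebra_simps J_add)
lemma cscale_diff_right: "cscale J c (x - y) = cscale J c x - cscale J c y"
  by (simp add: cscale_def algebra_simps J_diff)
lemma cscale_sum_right: "cscale J c (sum f S) = sum (\<lambda>i. cscale J c (f i)) S"
  by (induction S rule: infinite_finite_induct) (auto simp: cscale_zero2 cscale_add_right)
lemma cscale_scaleR: "cscale J c (r *\<^sub>R x) = cscale J (c * of_real r) x"
  by (simp add: cscale_def J_scale)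
lemma cscale_cscale: "cscale J c (cscale J d x) = cscale J (c * d) x"
  by (simp add: cscale_def J_add J_scale J_J algebra_simps)
lemma cscale_times: "cscale J c x * cscale J d y = cscale J (c * d) (x * y)"
  by (simp add: cscale_def algebra_simps J_mult1[symmetric] J_mult2[symmetric] J_J J_scale J_add)
lemma st_cscale: "st (cscale J c x) = cscale J (cnj c) (st x)"
  by (simp add: cscale_def st_add st_scale st_J)

lemma A_neg: "x \<in> A \<Longrightarrow> - x \<in> A" using A_cscale[of x "-1"] by (simp add: cscale_neg1)
lemma A_diff: "x \<in> A \<Longrightarrow> y \<in> A \<Longrightarrow> x - y \<in> A" using A_add[of x "-y"] A_neg by simp
lemma A_sum: "(\<And>i. i \<in> S \<Longrightarrow> f i \<in> A) \<Longrightarrow> sum f S \<in> A"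
  by (induction S rule: infinite_finite_induct) (auto simp: A0 A_add)
lemma A_spow: "x \<in> A \<Longrightarrow> spow x n \<in> A" by (induction n) (auto simp: A_mult)
lemma nA0: "nA 0 = 0" using nA_zero_iff A0 by blast
lemma nA_neg: "x \<in> A \<Longrightarrow> nA (- x) = nA x" using nA_cscale[of x "-1"] by (simp add: cscale_neg1)
lemma nA_nonneg: "x \<in> A \<Longrightarrow> nA x \<ge> 0"
  using nA_tri[of x "-x"] nA_neg[of x] A_neg[of x] nA0 by simp
lemma nA_scaleR: "x \<in> A \<Longrightarrow> nA (r *\<^sub>R x) = \<bar>r\<bar> * nA x" using nA_cscale[of x "of_real r"] by (simp add: cscale_of_real)
lemma nA_diff_tri: "x \<in> A \<Longrightarrow> y \<in> A \<Longrightarrow> nA (x - y) \<le> nA x + nA y"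
  using nA_tri[of x "-y"] nA_neg[of y] A_neg[of y] by simp
lemma nA_sum: "(\<And>i. i \<in> S \<Longrightarrow> f i \<in> A) \<Longrightarrow> nA (sum f S) \<le> (\<Sum>i\<in>S. nA (f i))"
proof (induction S rule: infinite_finite_induct)
  case (insert x F)
  then show ?case using nA_tri[of "f x" "sum f F"] A_sum[of F f] by fastforce
qed (auto simp: nA0)
lemma nA_spow: "x \<in> A \<Longrightarrow> nA (spow x n) \<le> nA x ^ Suc n"
proof (induction n)
  case (Suc n)
  have "nA (spow x (Suc n)) \<le> nA x * nA (spow x n)" using nA_mult Suc A_spow by simp
  also have "\<dots> \<le> nA x * nA x ^ Suc n" using Suc nA_nonneg by (simp add: mult_left_mono)
  finally show ?case by simp
qed simp
lemma nA_sym: "x \<in> A \<Longrightarrow> y \<in> A \<Longrightarrow> nA (x - y) = nA (y - x)"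
  using nA_neg[of "y - x"] A_diff by simp

lemma norm_st: "norm (st x) = norm x"
proof -
  have le: "norm y \<le> norm (st y)" for y
  proof (cases "norm y = 0")
    case False
    have "(norm y)^2 \<le> norm (st y) * norm y" using cstar[of y] norm_mult_ineq[of "st y" y] by simp
    then show ?thesis using False by (simp add: power2_eq_square)
  qed simp
  show ?thesis using le[of x] le[of "st x"] st_st by simp
qed

end


lemma sum_split_ivl: "n \<le> m \<Longrightarrow> sum (f::nat \<Rightarrow> 'c::ab_group_add) {1..m} - sum f {1..n} = sum f {Suc n..<Suc m}"
proof (induction m)
  case (Suc m)
  then show ?case
    by (cases "n = Suc m") (auto simp: not_less_eq_eq)
qed simp

context DS begin

definition nlim :: "(nat \<Rightarrow> 'b) \<Rightarrow> 'b \<Rightarrow> bool" where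
  "nlim X L \<longleftrightarrow> L \<in> A \<and> (\<lambda>n. nA (X n - L)) \<longlonglongrightarrow> 0"

lemma nlim_unique:
  assumes X: "\<And>n. X n \<in> A" and L: "nlim X L" and M: "nlim X M" shows "L = M"
proof -
  have LA: "L \<in> A" and MA: "M \<in> A" using L M by (auto simp: nlim_def)
  have le: "nA (L - M) \<le> nA (X n - M) + nA (X n - L)" for n
    using nA_diff_tri[of "X n - M" "X n - L"] X LA MA A_diff by (simp add: algebra_simps)
  have "(\<lambda>n. nA (X n - M) + nA (X n - L)) \<longlonglongrightarrow> 0 + 0"
    using L M by (intro tendsto_add) (auto simp: nlim_def)
  then have "nA (L - M) \<le> 0" using le by (intro LIMSEQ_le_const) auto
  moreover have "nA (L - M) \<ge> 0" using nA_nonneg A_diff LA MA by blast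
  ultimately have "nA (L - M) = 0" by simp
  then show ?thesis using nA_zero_iff[of "L - M"] A_diff LA MA by simp
qed

lemma nlim_cong:
  assumes XY: "(\<lambda>n. nA (X n - Y n)) \<longlonglongrightarrow> 0" and X: "\<And>n. X n \<in> A" and Y: "\<And>n. Y n \<in> A"
    and L: "nlim Y L" shows "nlim X L"
proof -
  have LA: "L \<in> A" using L by (simp add: nlim_def)
  have "(\<lambda>n. nA (X n - L)) \<longlonglongrightarrow> 0"
  proof (rule Lim_null_comparison)
    show "\<forall>\<^sub>F n in sequentially. norm (nA (X n - L)) \<le> nA (X n - Y n) + nA (Y n - L)"
      using nA_tri[of "X n - Y n" "Y n - L" for n] X Y LA A_diff nA_nonneg by (auto intro!: always_eventually)
    show "(\<lambda>n. nA (X n - Y n) + nA (Y n - L)) \<longlonglongrightarrow> 0"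
      using tendsto_add[OF XY L[unfolded nlim_def, THEN conjunct2]] by simp
  qed
  then show ?thesis using LA by (simp add: nlim_def)
qed

lemma nlim_add:
  assumes X: "\<And>n. X n \<in> A" and Y: "\<And>n. Y n \<in> A" and L: "nlim X L" and M: "nlim Y M"
  shows "nlim (\<lambda>n. X n + Y n) (L + M)"
proof -
  have LA: "L \<in> A" and MA: "M \<in> A" using L M by (auto simp: nlim_def)
  have "(\<lambda>n. nA (X n + Y n - (L + M))) \<longlonglongrightarrow> 0"
  proof (rule Lim_null_comparison)
    show "\<forall>\<^sub>F n in sequentially. norm (nA (X n + Y n - (L + M))) \<le> nA (X n - L) + nA (Y n - M)"
      using nA_tri[of "X n - L" "Y n - M" for n] X Y LA MA A_diff A_add nA_nonneg
      by (auto intro!: always_eventually simp: algebra_simps)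
    show "(\<lambda>n. nA (X n - L) + nA (Y n - M)) \<longlonglongrightarrow> 0"
      using tendsto_add[OF L[unfolded nlim_def, THEN conjunct2] M[unfolded nlim_def, THEN conjunct2]] by simp
  qed
  then show ?thesis using LA MA A_add by (simp add: nlim_def)
qed

lemma nlim_mult:
  assumes X: "\<And>n. X n \<in> A" and Y: "\<And>n. Y n \<in> A" and L: "nlim X L" and M: "nlim Y M"
  shows "nlim (\<lambda>n. X n * Y n) (L * M)"
proof -
  have LA: "L \<in> A" and MA: "M \<in> A" using L M by (auto simp: nlim_def)
  have t1: "(\<lambda>n. nA (X n - L)) \<longlonglongrightarrow> 0" and t2: "(\<lambda>n. nA (Y n - M)) \<longlonglongrightarrow> 0"
    using L M by (auto simp: nlim_def)
  have "(\<lambda>n. nA (X n * Y n - L * M)) \<longlonglongrightarrow> 0"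
  proof (rule Lim_null_comparison)
    show "\<forall>\<^sub>F n in sequentially. norm (nA (X n * Y n - L * M)) \<le>
        nA (X n - L) * (nA (Y n - M) + nA M) + nA L * nA (Y n - M)"
    proof (intro always_eventually allI)
      fix n
      have e: "X n * Y n - L * M = (X n - L) * Y n + L * (Y n - M)"
        by (simp add: algebra_simps)
      have a1: "X n - L \<in> A" "Y n - M \<in> A" using X Y LA MA A_diff by auto
      have yb: "nA (Y n) \<le> nA (Y n - M) + nA M" using nA_tri[OF a1(2) MA] by simp
      have "nA (X n * Y n - L * M) \<le> nA ((X n - L) * Y n) + nA (L * (Y n - M))"
        unfolding e using nA_tri a1 A_mult Y LA by simp
      also have "\<dots> \<le> nA (X n - L) * nA (Y n) + nA L * nA (Y n - M)"
        using nA_mult a1 Y LA by (intro add_mono) auto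
      also have "\<dots> \<le> nA (X n - L) * (nA (Y n - M) + nA M) + nA L * nA (Y n - M)"
        using yb a1 nA_nonneg LA by (intro add_mono mult_left_mono) auto
      finally show "norm (nA (X n * Y n - L * M)) \<le> nA (X n - L) * (nA (Y n - M) + nA M) + nA L * nA (Y n - M)"
        using nA_nonneg A_diff A_mult X Y LA MA by simp
    qed
    show "(\<lambda>n. nA (X n - L) * (nA (Y n - M) + nA M) + nA L * nA (Y n - M)) \<longlonglongrightarrow> 0"
      using tendsto_add[OF tendsto_mult[OF t1 tendsto_add[OF t2 tendsto_const]] tendsto_mult[OF tendsto_const t2]]
      by simp
  qed
  then show ?thesis using LA MA A_mult by (simp add: nlim_def)
qed

lemma nlim_st:
  assumes X: "\<And>n. X n \<in> A" and L: "nlim X L" shows "nlim (\<lambda>n. st (X n)) (st L)"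
proof -
  have LA: "L \<in> A" using L by (simp add: nlim_def)
  obtain C where C: "\<forall>x\<in>A. nA (st x) \<le> C * nA x" using nA_st by blast
  have t: "(\<lambda>n. nA (X n - L)) \<longlonglongrightarrow> 0" using L by (simp add: nlim_def)
  have "(\<lambda>n. nA (st (X n) - st L)) \<longlonglongrightarrow> 0"
  proof (rule Lim_null_comparison)
    show "\<forall>\<^sub>F n in sequentially. norm (nA (st (X n) - st L)) \<le> \<bar>C\<bar> * nA (X n - L)"
    proof (intro always_eventually allI)
      fix n
      have "nA (st (X n) - st L) \<le> C * nA (X n - L)" using C X LA A_diff st_diff by metis
      also have "\<dots> \<le> \<bar>C\<bar> * nA (X n - L)" using nA_nonneg[of "X n - L"] X LA A_diff
        by (intro mult_right_mono) auto
      finally show "norm (nA (st (X n) - st L)) \<le> \<bar>C\<bar> * nA (X n - L)"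
        using nA_nonneg A_diff A_st X LA by simp
    qed
    show "(\<lambda>n. \<bar>C\<bar> * nA (X n - L)) \<longlonglongrightarrow> 0" using tendsto_mult[OF tendsto_const t] by simp
  qed
  then show ?thesis using LA A_st by (simp add: nlim_def)
qed

lemma nlim_bound:
  assumes X: "\<And>n. X n \<in> A" and L: "nlim X L" and B: "\<And>n. nA (X n) \<le> B" shows "nA L \<le> B"
proof -
  have LA: "L \<in> A" and t: "(\<lambda>n. nA (X n - L)) \<longlonglongrightarrow> 0" using L by (auto simp: nlim_def)
  have le: "nA L \<le> B + nA (X n - L)" for n
    using nA_diff_tri[of "X n" "X n - L"] X LA A_diff B[of n] by simp
  have "(\<lambda>n. B + nA (X n - L)) \<longlonglongrightarrow> B + 0" by (intro tendsto_add tendsto_const t)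
  then show ?thesis using le by (intro LIMSEQ_le_const) auto
qed

lemma nlim_exists:
  assumes y: "\<And>j. y j \<in> A" and yb: "\<And>j. j \<ge> 1 \<Longrightarrow> nA (y j) \<le> \<alpha> j" and s: "summable \<alpha>"
  shows "\<exists>L. nlim (\<lambda>n. \<Sum>j=1..n. y j) L"
proof -
  define X where "X n = (\<Sum>j=1..n. y j)" for n
  have XA: "X n \<in> A" for n unfolding X_def by (rule A_sum) (rule y)
  have key: "nA (X m - X n) < e" if "e > 0" "N \<le> n" "n \<le> m"
     "\<forall>m\<ge>N. \<forall>n. norm (sum \<alpha> {m..<n}) < e" for m n N e
  proof -
    have "nA (X m - X n) = nA (sum y {Suc n..<Suc m})" unfolding X_def
      by (simp only: sum_split_ivl[OF that(3)])
    also have "\<dots> \<le> (\<Sum>j\<in>{Suc n..<Suc m}. nA (y j))" by (rule nA_sum) (use y in auto)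
    also have "\<dots> \<le> sum \<alpha> {Suc n..<Suc m}" by (rule sum_mono) (use yb in auto)
    also have "\<dots> \<le> norm (sum \<alpha> {Suc n..<Suc m})" by simp
    also have "\<dots> < e" by (rule that(4)[rule_format]) (use that(2) in simp)
    finally show ?thesis .
  qed
  have "\<forall>e>0. \<exists>N. \<forall>m\<ge>N. \<forall>n\<ge>N. nA (X m - X n) < e"
  proof (intro allI impI)
    fix e :: real assume e: "e > 0"
    then obtain N where N: "\<forall>m\<ge>N. \<forall>n. norm (sum \<alpha> {m..<n}) < e" using s summable_Cauchy by blast
    show "\<exists>N. \<forall>m\<ge>N. \<forall>n\<ge>N. nA (X m - X n) < e"
    proof (intro exI allI impI)
      fix m n assume mn: "N \<le> m" "N \<le> n"
      show "nA (X m - X n) < e"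
      proof (cases "n \<le> m")
        case True
        then show ?thesis using key[OF e mn(2) True N] by simp
      next
        case False
        then have "m \<le> n" by simp
        then have "nA (X n - X m) < e" using key[OF e mn(1) _ N] by simp
        then show ?thesis using nA_sym[OF XA XA, of n m] by simp
      qed
    qed
  qed
  then obtain L where "L \<in> A" "(\<lambda>n. nA (X n - L)) \<longlonglongrightarrow> 0" using nA_complete XA by blast
  then show ?thesis unfolding nlim_def X_def by blast
qed

end


lemma sum_atMost_split0: "sum (F::nat \<Rightarrow> 'c::comm_monoid_add) {..N} = F 0 + sum F {1..N}"
proof -
  have "{..N} = insert 0 {1..N}" by auto
  then show ?thesis by simp
qed

lemma sq_minus_tri:
  fixes f :: "nat \<Rightarrow> nat \<Rightarrow> 'c::ab_group_add"
  shows "(\<Sum>i\<le>N. \<Sum>j\<le>N. f i j) - (\<Sum>n\<le>N. \<Sum>i\<le>n. f i (n - i))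
       = (\<Sum>i\<le>N. \<Sum>j\<le>N. if N < i + j then f i j else 0)"
proof -
  have "(\<Sum>n\<le>N. \<Sum>i\<le>n. f i (n - i)) = (\<Sum>(i,j)\<in>{(i,j). i + j \<le> N}. f i j)"
    by (rule sum.triangle_reindex_eq[symmetric])
  also have "{(i,j). i + j \<le> N} = {x \<in> {..N} \<times> {..N}. fst x + snd x \<le> N}" by auto
  also have "(\<Sum>(i,j)\<in>{x \<in> {..N} \<times> {..N}. fst x + snd x \<le> N}. f i j)
      = (\<Sum>x\<in>{..N} \<times> {..N}. if fst x + snd x \<le> N then f (fst x) (snd x) else 0)"
    by (simp add: sum.inter_filter split_def)
  also have "\<dots> = (\<Sum>i\<le>N. \<Sum>j\<le>N. if i + j \<le> N then f i j else 0)"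
    by (simp add: sum.cartesian_product split_def)
  finally have e: "(\<Sum>n\<le>N. \<Sum>i\<le>n. f i (n - i)) = (\<Sum>i\<le>N. \<Sum>j\<le>N. if i + j \<le> N then f i j else 0)" .
  show ?thesis unfolding e sum_subtractf[symmetric]
    by (intro sum.cong refl) auto
qed

context DS begin

definition ee :: "real \<Rightarrow> nat \<Rightarrow> complex" where
  "ee t j = (\<i> * of_real t) ^ j /\<^sub>R fact j"

definition SS :: "real \<Rightarrow> nat \<Rightarrow> 'b" where
  "SS t n = (\<Sum>j=1..n. cscale J (ee t j) (spow a (j - 1)))"

definition U :: "real \<Rightarrow> 'b" where
  "U t = uA J A nA (t *\<^sub>R a)"

definition al :: "real \<Rightarrow> nat \<Rightarrow> real" where
  "al x j = x ^ j /\<^sub>R fact j"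

lemma ee0: "ee t 0 = 1" by (simp add: ee_def)

lemma cmod_ee: "cmod (ee t j) = \<bar>t\<bar> ^ j / fact j"
  by (simp add: ee_def norm_mult norm_power divide_inverse)

lemma spow_scaleR: "spow (t *\<^sub>R (x::'b)) m = t ^ Suc m *\<^sub>R spow x m"
  by (induction m) (auto simp: mult_scaleR_left mult_scaleR_right mult.assoc)

lemma st_spow_a: "st (spow a m) = spow a m"
proof (induction m)
  case (Suc m)
  have "st (spow a (Suc m)) = spow a m * a" using Suc by (simp add: st_mult sa)
  also have "\<dots> = spow a (Suc m)" using spow_mult[of a m 0] by simp
  finally show ?case .
qed (simp add: sa)

lemma A_term: "cscale J c (spow a m) \<in> A" using A_cscale A_spow aA by blast

lemma SS_A: "SS t n \<in> A" unfolding SS_def by (rule A_sum) (rule A_term)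

lemma nA_term: "j \<ge> 1 \<Longrightarrow> nA (cscale J (ee t j) (spow a (j - 1))) \<le> al (\<bar>t\<bar> * nA a) j"
proof -
  assume j: "j \<ge> 1"
  have "nA (cscale J (ee t j) (spow a (j - 1))) = cmod (ee t j) * nA (spow a (j - 1))"
    using nA_cscale A_spow aA by blast
  also have "\<dots> \<le> cmod (ee t j) * nA a ^ Suc (j - 1)"
    using nA_spow aA by (intro mult_left_mono) auto
  also have "\<dots> = al (\<bar>t\<bar> * nA a) j" using j
    by (simp add: cmod_ee al_def power_mult_distrib divide_inverse)
  finally show ?thesis .
qed

lemma al_sums: "al x sums exp x" unfolding al_def by (rule exp_converges)

lemma SS_exists: "\<exists>L. nlim (SS t) L"
  unfolding SS_def[abs_def]
  by (rule nlim_exists[OF A_term nA_term sums_summable[OF al_sums]])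

lemma uA_sum: "(\<Sum>j=1..n. cscale J (\<i> ^ j / of_nat (fact j)) (spow (t *\<^sub>R a) (j - 1))) = SS t n"
  unfolding SS_def
proof (intro sum.cong refl)
  fix j assume "j \<in> {1..n}"
  then have j: "Suc (j - 1) = j" by simp
  have ce: "\<i> ^ j / of_nat (fact j) * complex_of_real (t ^ j) = ee t j"
    by (simp add: ee_def power_mult_distrib scaleR_conv_of_real field_simps)
  have sp: "spow (t *\<^sub>R a) (j - 1) = t ^ j *\<^sub>R spow a (j - 1)" using spow_scaleR[of t a "j - 1"] j by simp
  show "cscale J (\<i> ^ j / of_nat (fact j)) (spow (t *\<^sub>R a) (j - 1)) = cscale J (ee t j) (spow a (j - 1))"
    by (simp only: sp cscale_scaleR ce)
qed

lemma U_nlim: "nlim (SS t) (U t)"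
proof -
  obtain L where L: "nlim (SS t) L" using SS_exists by blast
  have "U t = L" unfolding U_def uA_def uA_sum
  proof (rule the_equality)
    show "L \<in> A \<and> (\<lambda>n. nA (SS t n - L)) \<longlonglongrightarrow> 0" using L by (simp add: nlim_def)
    fix x assume "x \<in> A \<and> (\<lambda>n. nA (SS t n - x)) \<longlonglongrightarrow> 0"
    then have "nlim (SS t) x" by (simp add: nlim_def)
    then show "x = L" using nlim_unique[OF SS_A _ L] by simp
  qed
  then show ?thesis using L by simp
qed

lemma U_A: "U t \<in> A" using U_nlim by (simp add: nlim_def)

lemma nA_U: "nA (U t) \<le> exp (\<bar>t\<bar> * nA a)"
proof (rule nlim_bound[OF SS_A U_nlim])
  fix n
  have "nA (SS t n) \<le> (\<Sum>j=1..n. nA (cscale J (ee t j) (spow a (j - 1))))"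
    unfolding SS_def by (rule nA_sum) (rule A_term)
  also have "\<dots> \<le> (\<Sum>j=1..n. al (\<bar>t\<bar> * nA a) j)" by (rule sum_mono) (use nA_term in auto)
  also have "\<dots> \<le> suminf (al (\<bar>t\<bar> * nA a))"
    by (rule sum_le_suminf[OF sums_summable[OF al_sums]]) (auto simp: al_def nA_nonneg aA)
  also have "\<dots> = exp (\<bar>t\<bar> * nA a)" using al_sums sums_unique by metis
  finally show "nA (SS t n) \<le> exp (\<bar>t\<bar> * nA a)" .
qed

lemma U0: "U 0 = 0"
proof -
  have "SS 0 n = 0" for n unfolding SS_def by (rule sum.neutral) (auto simp: ee_def cscale_zero power_0_left)
  then have "SS 0 = (\<lambda>n. 0)" by (rule ext)
  moreover have "nlim (\<lambda>n. 0) 0" by (simp add: nlim_def nA0 A0)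
  ultimately show ?thesis using nlim_unique[OF SS_A U_nlim, of 0] by simp
qed

lemma st_U: "st (U t) = U (- t)"
proof -
  have "st (SS t n) = SS (- t) n" for n
    unfolding SS_def st_sum st_cscale st_spow_a
    by (intro sum.cong refl arg_cong2[where f="cscale J"]) (simp_all add: ee_def)
  then have "nlim (SS (- t)) (st (U t))" using nlim_st[OF SS_A U_nlim, of t] by simp
  then show ?thesis using nlim_unique[OF SS_A U_nlim] by simp
qed

end


context DS begin

lemma cscale_sum_left: "cscale J (sum f S) x = (\<Sum>i\<in>S. cscale J (f i) x)"
  by (induction S rule: infinite_finite_induct) (auto simp: cscale_zero cscale_add_left)

lemma ee_add: "ee (s + t) n = (\<Sum>i\<le>n. ee s i * ee t (n - i))"
proof -
  have "ee (s + t) n = (\<i> * of_real s + \<i> * of_real t) ^ n /\<^sub>R fact n"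
    by (simp add: ee_def distrib_left)
  also have "\<dots> = (\<Sum>i\<le>n. ((\<i> * of_real s) ^ i /\<^sub>R fact i) * ((\<i> * of_real t) ^ (n - i) /\<^sub>R fact (n - i)))"
    by (rule exp_series_add_commuting) (simp add: mult.commute)
  finally show ?thesis by (simp add: ee_def)
qed

lemma al_add: "al (x + y) n = (\<Sum>i\<le>n. al x i * al y (n - i))"
  unfolding al_def by (rule exp_series_add_commuting) (simp add: mult.commute)

lemma al_lim: "(\<lambda>N. (\<Sum>i\<le>N. al x i) * (\<Sum>j\<le>N. al y j) - (\<Sum>n\<le>N. al (x + y) n)) \<longlonglongrightarrow> 0"
proof -
  have "(\<lambda>N. (\<Sum>i\<le>N. al x i) * (\<Sum>j\<le>N. al y j) - (\<Sum>n\<le>N. al (x + y) n)) \<longlonglongrightarrow> exp x * exp y - exp (x + y)"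
    using al_sums[of x] al_sums[of y] al_sums[of "x + y"] unfolding sums_def_le
    by (intro tendsto_diff tendsto_mult)
  then show ?thesis by (simp add: exp_add)
qed

lemma U_add: "U (s + t) = U s + U t + U s * U t"
proof -
  define r where "r = nA a"
  define g where "g i j = (if i + j = 0 then 0 else cscale J (ee s i * ee t j) (spow a (i + j - 1)))" for i j
  define T where "T N = SS s N + SS t N + SS s N * SS t N" for N
  have gA: "g i j \<in> A" for i j unfolding g_def using A0 A_term by simp
  have c1: "T N = (\<Sum>i\<le>N. \<Sum>j\<le>N. g i j)" for N
  proof -
    have p: "SS s N * SS t N = (\<Sum>i=1..N. \<Sum>j=1..N. g i j)"
      unfolding SS_def sum_product
    proof (intro sum.cong refl)
      fix i j assume "i \<in> {1..N}" "j \<in> {1..N}"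
      then have ij: "i \<ge> 1" "j \<ge> 1" by auto
      have "spow a (i - 1) * spow a (j - 1) = spow a (i + j - 1)"
      proof -
        have "i - 1 + (j - 1) + 1 = i + j - 1" using ij by simp
        then show ?thesis using spow_mult[of a "i - 1" "j - 1"] by (simp only:)
      qed
      then show "cscale J (ee s i) (spow a (i - 1)) * cscale J (ee t j) (spow a (j - 1)) = g i j"
        using ij by (simp add: g_def cscale_times)
    qed
    have p1: "SS s N = (\<Sum>i=1..N. g i 0)" unfolding SS_def
      by (intro sum.cong refl) (auto simp: g_def ee0)
    have p2: "SS t N = (\<Sum>j=1..N. g 0 j)" unfolding SS_def
      by (intro sum.cong refl) (auto simp: g_def ee0)
    have "(\<Sum>i\<le>N. \<Sum>j\<le>N. g i j) = (\<Sum>j\<le>N. g 0 j) + (\<Sum>i=1..N. \<Sum>j\<le>N. g i j)"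
      by (rule sum_atMost_split0)
    also have "(\<Sum>j\<le>N. g 0 j) = (\<Sum>j=1..N. g 0 j)"
      using sum_atMost_split0[of "g 0" N] by (simp add: g_def)
    also have "(\<Sum>i=1..N. \<Sum>j\<le>N. g i j) = (\<Sum>i=1..N. g i 0 + (\<Sum>j=1..N. g i j))"
      by (intro sum.cong refl sum_atMost_split0)
    also have "\<dots> = (\<Sum>i=1..N. g i 0) + (\<Sum>i=1..N. \<Sum>j=1..N. g i j)"
      by (rule sum.distrib)
    finally have q: "(\<Sum>i\<le>N. \<Sum>j\<le>N. g i j) = (\<Sum>j=1..N. g 0 j) + ((\<Sum>i=1..N. g i 0) + (\<Sum>i=1..N. \<Sum>j=1..N. g i j))" .
    have "T N = SS s N + SS t N + (\<Sum>i=1..N. \<Sum>j=1..N. g i j)" unfolding T_def p ..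
    also have "\<dots> = (\<Sum>i=1..N. g i 0) + (\<Sum>j=1..N. g 0 j) + (\<Sum>i=1..N. \<Sum>j=1..N. g i j)"
      unfolding p1 p2 ..
    finally show ?thesis unfolding q by (simp add: algebra_simps)
  qed
  have c2: "SS (s + t) N = (\<Sum>n\<le>N. \<Sum>i\<le>n. g i (n - i))" for N
  proof -
    have "SS (s + t) N = (\<Sum>n=1..N. \<Sum>i\<le>n. g i (n - i))"
      unfolding SS_def ee_add cscale_sum_left
    proof (intro sum.cong refl)
      fix n i assume "n \<in> {1..N}" "i \<in> {..n}"
      then show "cscale J (ee s i * ee t (n - i)) (spow a (n - 1)) = g i (n - i)"
        by (auto simp: g_def)
    qed
    also have "\<dots> = (\<Sum>n\<le>N. \<Sum>i\<le>n. g i (n - i))"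
      using sum_atMost_split0[of "\<lambda>n. \<Sum>i\<le>n. g i (n - i)" N] by (simp add: g_def)
    finally show ?thesis .
  qed
  have c3: "T N - SS (s + t) N = (\<Sum>i\<le>N. \<Sum>j\<le>N. if N < i + j then g i j else 0)" for N
    unfolding c1 c2 by (rule sq_minus_tri)
  have gb: "nA (g i j) \<le> al (\<bar>s\<bar> * r) i * al (\<bar>t\<bar> * r) j" for i j
  proof (cases "i + j = 0")
    case True
    then show ?thesis by (simp add: g_def nA0 al_def)
  next
    case False
    have "nA (g i j) = cmod (ee s i * ee t j) * nA (spow a (i + j - 1))"
    proof -
      have "g i j = cscale J (ee s i * ee t j) (spow a (i + j - 1))" unfolding g_def using False by (simp only: if_False)
      then show ?thesis using nA_cscale A_spow aA by simp
    qed
    also have "\<dots> \<le> cmod (ee s i * ee t j) * r ^ Suc (i + j - 1)"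
      using nA_spow aA unfolding r_def by (intro mult_left_mono) auto
    also have "\<dots> = al (\<bar>s\<bar> * r) i * al (\<bar>t\<bar> * r) j" using False
      by (simp add: norm_mult cmod_ee al_def power_mult_distrib divide_inverse power_add)
    finally show ?thesis .
  qed
  have c4: "nA (T N - SS (s + t) N) \<le>
      (\<Sum>i\<le>N. al (\<bar>s\<bar> * r) i) * (\<Sum>j\<le>N. al (\<bar>t\<bar> * r) j) - (\<Sum>n\<le>N. al (\<bar>s\<bar> * r + \<bar>t\<bar> * r) n)" for N
  proof -
    define x where "x = \<bar>s\<bar> * r"
    define y where "y = \<bar>t\<bar> * r"
    have "nA (T N - SS (s + t) N) \<le> (\<Sum>i\<le>N. nA (\<Sum>j\<le>N. if N < i + j then g i j else 0))"
      unfolding c3 by (rule nA_sum) (rule A_sum, simp add: gA A0)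
    also have "\<dots> \<le> (\<Sum>i\<le>N. \<Sum>j\<le>N. nA (if N < i + j then g i j else 0))"
      by (rule sum_mono, rule nA_sum) (simp add: gA A0)
    also have "\<dots> \<le> (\<Sum>i\<le>N. \<Sum>j\<le>N. if N < i + j then al x i * al y j else 0)"
      by (intro sum_mono) (simp add: gb nA0 x_def y_def)
    also have "\<dots> = (\<Sum>i\<le>N. \<Sum>j\<le>N. al x i * al y j) - (\<Sum>n\<le>N. \<Sum>i\<le>n. al x i * al y (n - i))"
      by (rule sq_minus_tri[symmetric])
    also have "\<dots> = (\<Sum>i\<le>N. al x i) * (\<Sum>j\<le>N. al y j) - (\<Sum>n\<le>N. al (x + y) n)"
      by (simp add: sum_product al_add)
    finally show ?thesis by (simp add: x_def y_def)
  qed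
  have TA: "T N \<in> A" for N unfolding T_def using SS_A A_add A_mult by simp
  have lim0: "(\<lambda>N. nA (SS (s + t) N - T N)) \<longlonglongrightarrow> 0"
  proof (rule Lim_null_comparison)
    show "\<forall>\<^sub>F N in sequentially. norm (nA (SS (s + t) N - T N)) \<le>
      (\<Sum>i\<le>N. al (\<bar>s\<bar> * r) i) * (\<Sum>j\<le>N. al (\<bar>t\<bar> * r) j) - (\<Sum>n\<le>N. al (\<bar>s\<bar> * r + \<bar>t\<bar> * r) n)"
    proof (intro always_eventually allI)
      fix N
      have "norm (nA (SS (s + t) N - T N)) = nA (T N - SS (s + t) N)"
        using nA_sym[OF SS_A TA, of "s + t" N N] nA_nonneg[OF A_diff[OF SS_A TA, of "s + t" N N]] by simp
      then show "norm (nA (SS (s + t) N - T N)) \<le>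
      (\<Sum>i\<le>N. al (\<bar>s\<bar> * r) i) * (\<Sum>j\<le>N. al (\<bar>t\<bar> * r) j) - (\<Sum>n\<le>N. al (\<bar>s\<bar> * r + \<bar>t\<bar> * r) n)"
        using c4[of N] by simp
    qed
  qed (rule al_lim)
  have nT: "nlim T (U s + U t + U s * U t)" unfolding T_def
    by (intro nlim_add nlim_mult U_nlim SS_A A_add A_mult)
  have "nlim (SS (s + t)) (U s + U t + U s * U t)"
    by (rule nlim_cong[OF lim0 SS_A TA nT])
  then show ?thesis using nlim_unique[OF SS_A U_nlim] by simp
qed

end


context DS begin

lemma norm_U: "norm (U t) \<le> 2"
proof -
  have z: "U (- t) + U t + U (- t) * U t = 0" using U_add[of "- t" t] U0 by simp
  have "(norm (U t))^2 = norm (st (U t) * U t)" by (rule cstar[symmetric])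
  also have "st (U t) * U t = - (U (- t) + U t)" using z st_U by (simp add: eq_neg_iff_add_eq_0 algebra_simps)
  also have "norm (- (U (- t) + U t)) \<le> norm (U (- t)) + norm (U t)"
    unfolding norm_minus_cancel by (rule norm_triangle_ineq)
  also have "norm (U (- t)) = norm (U t)" using norm_st[of "U t"] st_U by simp
  finally have "norm (U t) * norm (U t) \<le> 2 * norm (U t)" by (simp add: power2_eq_square)
  then show ?thesis by (cases "norm (U t) = 0") auto
qed

lemma U_pow_bound:
  "nA (U (real (Suc n) * t) - spow (U t) n) \<le> (2 ^ Suc n - 2) * (max 1 (nA (U t))) ^ n"
proof (induction n)
  case 0
  then show ?case by (simp add: nA0)
next
  case (Suc n)
  define w where "w = U t"
  define X where "X = U (real (Suc n) * t)"
  define F where "F = max 1 (nA w)"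
  define \<beta> where "\<beta> = (2 ^ Suc n - 2) * F ^ n"
  have wA: "w \<in> A" and XA: "X \<in> A" unfolding w_def X_def by (rule U_A)+
  have dA: "X - spow w n \<in> A" using XA A_spow wA A_diff by blast
  have F1: "1 \<le> F" and fF: "nA w \<le> F" unfolding F_def by auto
  have IH: "nA (X - spow w n) \<le> \<beta>" using Suc unfolding X_def w_def \<beta>_def F_def by simp
  have \<delta>0: "0 \<le> nA (X - spow w n)" using nA_nonneg dA by blast
  have f0: "0 \<le> nA w" using nA_nonneg wA by blast
  have \<beta>0: "0 \<le> \<beta>" using \<delta>0 IH by simp
  have e1: "U (real (Suc (Suc n)) * t) = X + w + X * w"
    using U_add[of "real (Suc n) * t" t] unfolding X_def w_def by (simp add: algebra_simps)
  have e2: "spow w (Suc n) = spow w n * w" using spow_mult[of w n 0] by simp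
  have sA: "spow w n \<in> A" using A_spow wA by blast
  have e3: "U (real (Suc (Suc n)) * t) - spow w (Suc n) = (((X - spow w n) + w) + (X - spow w n) * w) + spow w n"
    unfolding e1 e2 by (simp add: algebra_simps)
  have sF: "nA (spow w n) \<le> F ^ Suc n"
    using nA_spow[OF wA, of n] power_mono[OF fF f0, of "Suc n"] by linarith
  have "nA (U (real (Suc (Suc n)) * t) - spow w (Suc n)) \<le> nA (((X - spow w n) + w) + (X - spow w n) * w) + nA (spow w n)"
    unfolding e3 by (rule nA_tri) (use dA wA sA A_add A_mult in auto)
  also have "\<dots> \<le> ((nA (X - spow w n) + nA w) + nA (X - spow w n) * nA w) + nA (spow w n)"
    using nA_tri[OF A_add[OF dA wA] A_mult[OF dA wA]] nA_tri[OF dA wA] nA_mult[OF dA wA] by simp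
  also have "\<dots> \<le> ((\<beta> + F) + \<beta> * F) + F ^ Suc n"
    using IH fF \<delta>0 f0 sF by (intro add_mono mult_mono) auto
  also have "\<dots> \<le> (2 ^ Suc (Suc n) - 2) * F ^ Suc n"
  proof -
    have "\<beta> \<le> \<beta> * F" using \<beta>0 F1 by (simp add: mult_le_cancel_left1)
    moreover have "F \<le> F ^ Suc n"
    proof -
      have "1 \<le> F ^ n" by (rule one_le_power[OF F1])
      then show ?thesis using F1 by (simp add: mult_le_cancel_left1)
    qed
    moreover have "\<beta> * F = (2 ^ Suc n - 2) * F ^ Suc n" unfolding \<beta>_def by (simp add: algebra_simps)
    ultimately show ?thesis by (simp add: algebra_simps)
  qed
  finally show ?case unfolding w_def F_def .
qed

end


theorem proposition3p5:
  fixes J st :: "'b::{real_normed_algebra,banach} \<Rightarrow> 'b"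
    and A :: "'b set" and nA :: "'b \<Rightarrow> real"
    and k :: nat and p q \<tau> :: real and a :: 'b
  assumes "differential_subalgebra J st A nA k p q"
    and "a \<in> A" and "st a = a"
    and "\<tau> > log (real k) (max (real k - 1) p)"
  shows "\<exists>C M. \<forall>t::real. \<bar>t\<bar> \<ge> M \<longrightarrow> nA (uA J A nA (t *\<^sub>R a)) \<le> C * exp (\<bar>t\<bar> powr \<tau>)"
proof -
  note Dd = assms(1)[unfolded differential_subalgebra_def]
  have cs: "cstar_algebra J st" using Dd by (rule conjunct1)
  have bs: "banach_star_subalgebra J st A nA" using Dd[THEN conjunct2] by (rule conjunct1)
  have k2: "k \<ge> 2" using Dd[THEN conjunct2, THEN conjunct2] by (rule conjunct1)
  have p0: "p > 0" using Dd[THEN conjunct2, THEN conjunct2, THEN conjunct2] by (rule conjunct1)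
  have q0: "q > 0" using Dd[THEN conjunct2, THEN conjunct2, THEN conjunct2, THEN conjunct2] by (rule conjunct1)
  have "\<exists>C>0. \<forall>a\<in>A. nA (spow a (k - 1)) \<le> C * nA a powr p * norm a powr q"
    using Dd[THEN conjunct2, THEN conjunct2, THEN conjunct2, THEN conjunct2, THEN conjunct2] by (rule conjunct2)
  then obtain Cd where Cd0: "Cd > 0" and Cd: "\<And>x. x \<in> A \<Longrightarrow> nA (spow x (k - 1)) \<le> Cd * nA x powr p * norm x powr q"
    by blast
  interpret DS J st A nA a using cs bs assms(2,3) by (unfold_locales)

  define r0 where "r0 = nA a"
  define R where "R = max (real k - 1) p"
  define \<rho> where "\<rho> = log (real k) R"
  define \<sigma> where "\<sigma> = (\<rho> + \<tau>) / 2"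
  define r' where "r' = real k powr \<sigma>"
  define D where "D = 2 ^ k + Cd * 2 powr q"
  define c where "c = ln D / (r' - 1)"
  define f where "f t = max 1 (nA (U t))" for t
  define g where "g t = ln (f t)" for t
  define h where "h t = g t + c" for t
  define H where "H = real k * r0 + c"

  have k1: "1 < real k" using k2 by simp
  have R1: "1 \<le> R" using k2 by (simp add: R_def)
  have \<rho>0: "0 \<le> \<rho>" using k1 R1 unfolding \<rho>_def by simp
  have \<rho>\<tau>: "\<rho> < \<tau>" using assms(4) unfolding \<rho>_def R_def .
  have \<sigma>0: "0 < \<sigma>" and \<rho>\<sigma>: "\<rho> < \<sigma>" and \<sigma>\<tau>: "\<sigma> < \<tau>" using \<rho>0 \<rho>\<tau> unfolding \<sigma>_def by simp_all
  have r'1: "1 < r'" using powr_less_mono[OF \<sigma>0 k1] k1 unfolding r'_def by simp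
  have Rr': "R < r'"
  proof -
    have "R = real k powr \<rho>" unfolding \<rho>_def using k1 R1 by simp
    also have "\<dots> < r'" unfolding r'_def by (rule powr_less_mono[OF \<rho>\<sigma> k1])
    finally show ?thesis .
  qed
  have D1: "1 \<le> D" unfolding D_def using Cd0 one_le_power[of "2::real" k] by (simp add: add_increasing2)
  have f1: "1 \<le> f t" for t unfolding f_def by simp
  have g0: "0 \<le> g t" for t unfolding g_def using f1 by simp
  have c0: "0 \<le> c" unfolding c_def using D1 r'1 by simp
  have r00: "0 \<le> r0" unfolding r0_def using nA_nonneg aA by blast

  have key3: "f (real k * t) \<le> D * f t powr R" for t
  proof -
    define w where "w = U t"
    define F where "F = f t"
    have wA: "w \<in> A" unfolding w_def by (rule U_A)
    have F1: "1 \<le> F" unfolding F_def by (rule f1)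
    have fF: "nA w \<le> F" unfolding F_def f_def w_def by simp
    have f0: "0 \<le> nA w" using nA_nonneg wA by blast
    have sA: "spow w (k - 1) \<in> A" using A_spow wA by blast
    have kk: "Suc (k - 1) = k" using k2 by simp
    have k22: "2 \<le> (2::real) ^ k" using k2 power_increasing[of 1 k "2::real"] by simp
    have mono: "\<And>x y. x \<le> y \<Longrightarrow> (2 ^ k - 2) * x \<le> (2 ^ k - 2) * (y::real)"
      using k22 by (simp add: mult_left_mono)
    have FR1: "1 \<le> F powr R" using F1 R1 by (simp add: ge_one_powr_ge_zero)
    have b0: "nA (U (real k * t)) \<le> nA (U (real k * t) - spow w (k - 1)) + nA (spow w (k - 1))"
      using nA_tri[OF A_diff[OF U_A sA] sA] by simp
    have b1: "nA (U (real k * t) - spow w (k - 1)) \<le> (2 ^ k - 2) * F ^ (k - 1)"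
      using U_pow_bound[of "k - 1" t] unfolding kk w_def F_def f_def .
    have e1: "F ^ (k - 1) = F powr (real k - 1)"
      using F1 k2 powr_realpow[of F "k - 1"] by (simp add: of_nat_diff)
    have e2: "F powr (real k - 1) \<le> F powr R" using F1 by (intro powr_mono) (auto simp: R_def)
    have b1': "nA (U (real k * t) - spow w (k - 1)) \<le> (2 ^ k - 2) * F powr R"
      using b1 mono[OF e2] unfolding e1 by (rule order_trans)
    have b2: "nA (spow w (k - 1)) \<le> Cd * nA w powr p * norm w powr q" by (rule Cd[OF wA])
    have b3: "Cd * nA w powr p * norm w powr q \<le> Cd * F powr R * 2 powr q"
    proof -
      have "nA w powr p \<le> F powr p" using p0 f0 fF by (intro powr_mono2) auto
      also have "\<dots> \<le> F powr R" using F1 by (intro powr_mono) (auto simp: R_def)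
      finally have a1: "nA w powr p \<le> F powr R" .
      have a2: "norm w powr q \<le> 2 powr q" using q0 norm_U unfolding w_def by (intro powr_mono2) auto
      show ?thesis using a1 a2 Cd0 by (intro mult_mono mult_left_mono) auto
    qed
    have "nA (U (real k * t)) \<le> (2 ^ k - 2) * F powr R + Cd * F powr R * 2 powr q"
      using b0 b1' b2 b3 by linarith
    also have "\<dots> \<le> D * F powr R" unfolding D_def using FR1 by (simp add: algebra_simps)
    finally have b: "nA (U (real k * t)) \<le> D * F powr R" .
    have "1 * 1 \<le> D * F powr R" using D1 FR1 by (intro mult_mono) auto
    then show ?thesis using b unfolding f_def F_def by simp
  qed
  have key4: "g (real k * t) \<le> ln D + r' * g t" for t
  proof -
    have fp: "0 < f t" using f1[of t] by simp
    have "g (real k * t) \<le> ln (D * f t powr R)"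
      unfolding g_def using key3[of t] f1[of "real k * t"] by simp
    also have "\<dots> = ln D + R * g t" using D1 fp unfolding g_def by (simp add: ln_mult)
    also have "\<dots> \<le> ln D + r' * g t" using Rr' g0[of t] by (simp add: mult_right_mono)
    finally show ?thesis .
  qed
  have key5: "h (real k * t) \<le> r' * h t" for t
  proof -
    have "ln D + c = r' * c" unfolding c_def using r'1 by (simp add: field_simps)
    then show ?thesis using key4[of t] unfolding h_def by (simp add: algebra_simps)
  qed
  have key6: "g t \<le> \<bar>t\<bar> * r0" for t
  proof -
    have "f t \<le> exp (\<bar>t\<bar> * r0)" unfolding f_def r0_def using nA_U[of t] r00 unfolding r0_def by simp
    moreover have "0 < f t" using f1[of t] by simp
    ultimately have "ln (f t) \<le> ln (exp (\<bar>t\<bar> * r0))" by (subst ln_le_cancel_iff) auto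
    then show ?thesis unfolding g_def by simp
  qed
  have H0: "0 \<le> H" unfolding H_def using r00 c0 k1 by simp
  have ind: "\<forall>s. 1 \<le> \<bar>s\<bar> \<and> \<bar>s\<bar> < real k ^ n \<longrightarrow> h s \<le> H * \<bar>s\<bar> powr \<sigma>" for n
  proof (induction n)
    case 0
    then show ?case by simp
  next
    case (Suc n)
    show ?case
    proof (intro allI impI)
      fix s assume s: "1 \<le> \<bar>s\<bar> \<and> \<bar>s\<bar> < real k ^ Suc n"
      have sp1: "1 \<le> \<bar>s\<bar> powr \<sigma>" using s \<sigma>0 by (simp add: ge_one_powr_ge_zero)
      show "h s \<le> H * \<bar>s\<bar> powr \<sigma>"
      proof (cases "\<bar>s\<bar> < real k")
        case True
        have "h s \<le> \<bar>s\<bar> * r0 + c" unfolding h_def using key6[of s] by simp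
        also have "\<dots> \<le> H" unfolding H_def using True r00 by (simp add: mult_right_mono)
        also have "\<dots> \<le> H * \<bar>s\<bar> powr \<sigma>" using H0 sp1 by (simp add: mult_le_cancel_left1)
        finally show ?thesis .
      next
        case False
        define s' where "s' = s / real k"
        have ss: "s = real k * s'" unfolding s'_def using k1 by simp
        have as': "\<bar>s'\<bar> = \<bar>s\<bar> / real k" unfolding s'_def by simp
        have "1 \<le> \<bar>s'\<bar>" unfolding as' using False k1 by simp
        moreover have "\<bar>s'\<bar> < real k ^ n" unfolding as' using s k1 by (simp add: field_simps)
        ultimately have IH: "h s' \<le> H * \<bar>s'\<bar> powr \<sigma>" using Suc.IH by blast
        have "h s \<le> r' * h s'" unfolding ss by (rule key5)
        also have "\<dots> \<le> r' * (H * \<bar>s'\<bar> powr \<sigma>)" using IH r'1 by simp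
        also have "\<dots> = H * \<bar>s\<bar> powr \<sigma>" unfolding r'_def as' using k1
          by (simp add: powr_divide)
        finally show ?thesis .
      qed
    qed
  qed
  define M where "M = max 1 (H powr (1 / (\<tau> - \<sigma>)))"
  show ?thesis
  proof (intro exI allI impI)
    fix t :: real assume tM: "M \<le> \<bar>t\<bar>"
    have t1: "1 \<le> \<bar>t\<bar>" using tM unfolding M_def by simp
    obtain n where n: "\<bar>t\<bar> < real k ^ n" using real_arch_pow[OF k1] by blast
    have ht: "h t \<le> H * \<bar>t\<bar> powr \<sigma>" using ind[of n] t1 n by blast
    have ts: "0 < \<tau> - \<sigma>" using \<sigma>\<tau> by simp
    have "H = (H powr (1 / (\<tau> - \<sigma>))) powr (\<tau> - \<sigma>)" using H0 ts by (simp add: powr_powr)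
    also have "\<dots> \<le> M powr (\<tau> - \<sigma>)" unfolding M_def using ts by (intro powr_mono2) auto
    also have "\<dots> \<le> \<bar>t\<bar> powr (\<tau> - \<sigma>)" using tM ts M_def by (intro powr_mono2) auto
    finally have HH: "H \<le> \<bar>t\<bar> powr (\<tau> - \<sigma>)" .
    have "H * \<bar>t\<bar> powr \<sigma> \<le> \<bar>t\<bar> powr (\<tau> - \<sigma>) * \<bar>t\<bar> powr \<sigma>" using HH by (simp add: mult_right_mono)
    also have "\<dots> = \<bar>t\<bar> powr \<tau>" by (simp add: powr_add[symmetric])
    finally have ht2: "h t \<le> \<bar>t\<bar> powr \<tau>" using ht by simp
    have "nA (uA J A nA (t *\<^sub>R a)) = nA (U t)" by (simp add: U_def)
    also have "\<dots> \<le> f t" unfolding f_def by simp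
    also have "\<dots> = exp (g t)" unfolding g_def using f1[of t] by simp
    also have "\<dots> \<le> exp (h t)" unfolding h_def using c0 by simp
    also have "\<dots> \<le> exp (\<bar>t\<bar> powr \<tau>)" using ht2 by simp
    finally show "nA (uA J A nA (t *\<^sub>R a)) \<le> 1 * exp (\<bar>t\<bar> powr \<tau>)" by simp
  qed
qed


end
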